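(* Let $A_*,R_*,\gamma>0$, let $r_k=R_*k^\gamma$, let $a_{1,1}=A_*$ and $a_{k,\ell}=0$ for $(k,\ell)\neq(1,1)$, and let $s_k\ge0$ satisfy: for every $\mu\ge0$, $\sum_k k^\mu s_k<\infty$, with $\mathfrak s_1:=\sum_k ks_k$. Consider the system $\frac{d}{dt}c_1=-A_*c_1^2+s_1-r_1c_1$, $\frac{d}{dt}c_2=\frac{A_*}{2}c_1^2+s_2-r_2c_2$, $\frac{d}{dt}c_k=s_k-r_kc_k$ $(k\ge3)$. Then: (1) Its unique nonnegative equilibrium is $$Q_1=\tfrac12\sqrt{\tfrac{r_1^2}{A_*^2}+\tfrac{4s_1}{A_*}}-\tfrac{r_1}{2A_*},\qquad Q_2=\tfrac{A_*}{2r_2}Q_1^2+\tfrac{s_2}{r_2},\qquad Q_k=\tfrac{s_k}{r_k}\ (k\ge3).$$ (2) For every nonnegative initial datum $c^{\mathrm{in}}$ with $\sum_k kc^{\mathrm{in}}_k<\infty$ and every $\mu\ge1$, the solution satisfies $\sum_{k\ge1}k^\mu|c_k(t)-Q_k|\le Ke^{-\kappa t}$ for all $t\ge1$, with $\kappa=\min\{\frac{A_*}{2\alpha},\frac{r_2}{2},\frac{3^\gamma}{2}R_*\}$, where $\alpha=(r_1^2/A_*^2+4s_1/A_* )^{-1/2}$, and $K$ a constant depending on $c^{\mathrm{in}}$, $\mu$ and the coefficients. (3) If moreover $A_*s_1\ge4R_*^2$, then for every $\mu\ge1$, every $\beta\in[0,1]$ and every nonnegative sequence $c$ (for which the sum converges),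 $2A_*(C_\mu+2)\sum_{\ell\ge1}\ell^{\mu+\beta}(c_\ell+Q_\ell)-R_*\ge(3(C_\mu+2)-1)R_*>0$, where $C_\mu=2^{\max\{\mu-2,0\}}\max\{\mu,\mu(\mu-1)\}$.
   Context: $\mathbb N=\{1,2,\dots\}$. Solutions of the system are understood as nonnegative classical solutions on $[0,\infty)$ with $c_k(0)=c_k^{\mathrm{in}}$. *)

theory Defs
  imports "HOL-Analysis.Analysis"
begin

text \<open>Sequences are indexed by nat; only indices k >= 1 are meaningful (index 0 is ignored).\<close>

definition rate :: "real \<Rightarrow> real \<Rightarrow> nat \<Rightarrow> real" where
  "rate Rs \<gamma> k = Rs * real k powr \<gamma>"

definition rhs :: "real \<Rightarrow> real \<Rightarrow> real \<Rightarrow> (nat \<Rightarrow> real) \<Rightarrow> (nat \<Rightarrow> real) \<Rightarrow> nat \<Rightarrow> real" where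
  "rhs A Rs \<gamma> s c k =
     (if k = 1 then - A * (c 1)\<^sup>2 + s 1 - rate Rs \<gamma> 1 * c 1
      else if k = 2 then A / 2 * (c 1)\<^sup>2 + s 2 - rate Rs \<gamma> 2 * c 2
      else s k - rate Rs \<gamma> k * c k)"

definition is_equilibrium :: "real \<Rightarrow> real \<Rightarrow> real \<Rightarrow> (nat \<Rightarrow> real) \<Rightarrow> (nat \<Rightarrow> real) \<Rightarrow> bool" where
  "is_equilibrium A Rs \<gamma> s q \<longleftrightarrow> (\<forall>k\<ge>1. rhs A Rs \<gamma> s q k = 0)"

definition nonneg_seq :: "(nat \<Rightarrow> real) \<Rightarrow> bool" where
  "nonneg_seq q \<longleftrightarrow> (\<forall>k\<ge>1. q k \<ge> 0)"

definition is_solution :: "real \<Rightarrow> real \<Rightarrow> real \<Rightarrow> (nat \<Rightarrow> real) \<Rightarrow> (nat \<Rightarrow> real)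
    \<Rightarrow> (real \<Rightarrow> nat \<Rightarrow> real) \<Rightarrow> bool" where
  "is_solution A Rs \<gamma> s cin c \<longleftrightarrow>
     (\<forall>k\<ge>1. c 0 k = cin k) \<and>
     (\<forall>t\<ge>0. \<forall>k\<ge>1. c t k \<ge> 0) \<and>
     (\<forall>t\<ge>0. \<forall>k\<ge>1. ((\<lambda>\<tau>. c \<tau> k) has_real_derivative rhs A Rs \<gamma> s (c t) k) (at t within {0..}))"

definition Qeq :: "real \<Rightarrow> real \<Rightarrow> real \<Rightarrow> (nat \<Rightarrow> real) \<Rightarrow> nat \<Rightarrow> real" where
  "Qeq A Rs \<gamma> s k =
     (let r = rate Rs \<gamma>;
          Q1 = 1/2 * sqrt ((r 1)\<^sup>2 / A\<^sup>2 + 4 * s 1 / A) - r 1 / (2 * A)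
      in if k = 1 then Q1
         else if k = 2 then A / (2 * r 2) * Q1\<^sup>2 + s 2 / r 2
         else s k / r k)"

definition alpha_const :: "real \<Rightarrow> real \<Rightarrow> real \<Rightarrow> (nat \<Rightarrow> real) \<Rightarrow> real" where
  "alpha_const A Rs \<gamma> s = 1 / sqrt ((rate Rs \<gamma> 1)\<^sup>2 / A\<^sup>2 + 4 * s 1 / A)"

definition kappa_const :: "real \<Rightarrow> real \<Rightarrow> real \<Rightarrow> (nat \<Rightarrow> real) \<Rightarrow> real" where
  "kappa_const A Rs \<gamma> s =
     Min {A / (2 * alpha_const A Rs \<gamma> s), rate Rs \<gamma> 2 / 2, 3 powr \<gamma> / 2 * Rs}"

definition C_const :: "real \<Rightarrow> real" where
  "C_const \<mu> = 2 powr (max (\<mu> - 2) 0) * max \<mu> (\<mu> * (\<mu> - 1))"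

end

theory Submission
  imports Defs
begin


lemma decr0:
  fixes f f' :: "real \<Rightarrow> real"
  assumes d: "\<And>t. t \<ge> 0 \<Longrightarrow> (f has_real_derivative f' t) (at t within {0..})"
    and n: "\<And>t. t \<ge> 0 \<Longrightarrow> f' t \<le> 0" and t: "t \<ge> 0"
  shows "f t \<le> f 0"
proof (rule DERIV_nonpos_imp_decreasing_open[OF t])
  fix x :: real assume x: "0 < x" "x < t"
  have "x \<in> interior {0..}" using x by simp
  then have "at x within {0..} = at x" by (rule at_within_interior)
  then show "\<exists>y. DERIV f x :> y \<and> y \<le> 0" using d[of x] n[of x] x by auto
next
  show "continuous_on {0..t} f"
  proof (rule continuous_on_subset)
    show "continuous_on {0..} f"
      unfolding continuous_on_eq_continuous_within
      using d DERIV_continuous by (metis atLeast_iff)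
  qed auto
qed

lemma sq_exp_deriv:
  fixes x :: "real \<Rightarrow> real"
  assumes "(x has_real_derivative D) (at t within S)"
  shows "((\<lambda>\<tau>. (x \<tau> - q)\<^sup>2 * exp (2 * a * \<tau>)) has_real_derivative
     exp (2*a*t) * (2 * (x t - q) * D + 2 * a * (x t - q)\<^sup>2)) (at t within S)"
  using assms
  by (auto intro!: derivative_eq_intros simp: algebra_simps power2_eq_square)

lemma sqrt_bound:
  fixes d b D t :: real
  assumes "d\<^sup>2 * exp (2*b*t) \<le> D\<^sup>2" "D \<ge> 0"
  shows "\<bar>d\<bar> \<le> D * exp (- b * t)"
proof -
  have "(\<bar>d\<bar> * exp (b*t))\<^sup>2 = d\<^sup>2 * exp (2*b*t)"
    by (simp add: power_mult_distrib exp_double[symmetric] power2_eq_square algebra_simps flip: exp_add)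
  then have "(\<bar>d\<bar> * exp (b*t))\<^sup>2 \<le> D\<^sup>2" using assms by simp
  then have "\<bar>d\<bar> * exp (b*t) \<le> D" using assms(2) by (meson abs_ge_zero exp_ge_zero mult_nonneg_nonneg power2_le_imp_le)
  then show ?thesis by (simp add: exp_minus field_simps)
qed


lemma rate1[simp]: "rate Rs \<gamma> 1 = Rs" "rate Rs \<gamma> (Suc 0) = Rs" by (simp_all add: rate_def)

lemma rate_pos: "Rs > 0 \<Longrightarrow> k \<ge> 1 \<Longrightarrow> rate Rs \<gamma> k > 0"
  by (simp add: rate_def)

lemma rate_mono: "Rs > 0 \<Longrightarrow> \<gamma> > 0 \<Longrightarrow> 1 \<le> j \<Longrightarrow> j \<le> k \<Longrightarrow> rate Rs \<gamma> j \<le> rate Rs \<gamma> k"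
  by (simp add: rate_def powr_mono2)

lemma rate_ge: "Rs > 0 \<Longrightarrow> \<gamma> > 0 \<Longrightarrow> 1 \<le> k \<Longrightarrow> Rs \<le> rate Rs \<gamma> k"
  using rate_mono[of Rs \<gamma> 1 k] by simp

lemma S_eq:
  assumes "A > 0"
  shows "sqrt (Rs\<^sup>2 / A\<^sup>2 + 4 * s1 / A) = sqrt (Rs\<^sup>2 + 4 * A * s1) / A"
proof -
  have "Rs\<^sup>2 / A\<^sup>2 + 4 * s1 / A = (Rs\<^sup>2 + 4 * A * s1) / A\<^sup>2"
    using assms by (simp add: field_simps power2_eq_square)
  then show ?thesis using assms by (simp add: real_sqrt_divide)
qed

lemma Q1_eq:
  assumes "A > 0"
  shows "Qeq A Rs \<gamma> s 1 = (sqrt (Rs\<^sup>2 + 4 * A * s 1) - Rs) / (2 * A)"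
proof -
  have "Qeq A Rs \<gamma> s 1 = 1/2 * sqrt (Rs\<^sup>2 / A\<^sup>2 + 4 * s 1 / A) - Rs / (2 * A)"
    by (simp add: Qeq_def Let_def)
  also have "\<dots> = 1/2 * (sqrt (Rs\<^sup>2 + 4 * A * s 1) / A) - Rs / (2 * A)"
    using S_eq[OF assms] by simp
  also have "\<dots> = (sqrt (Rs\<^sup>2 + 4 * A * s 1) - Rs) / (2 * A)"
    using assms by (simp add: field_simps)
  finally show ?thesis .
qed

lemma Q2_eq: "Qeq A Rs \<gamma> s 2 = A / (2 * rate Rs \<gamma> 2) * (Qeq A Rs \<gamma> s 1)\<^sup>2 + s 2 / rate Rs \<gamma> 2"
  by (simp add: Qeq_def Let_def)

lemma Qk_eq: "k \<ge> 3 \<Longrightarrow> Qeq A Rs \<gamma> s k = s k / rate Rs \<gamma> k"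
  by (simp add: Qeq_def Let_def)

lemma alpha_eq:
  assumes "A > 0"
  shows "alpha_const A Rs \<gamma> s = A / sqrt (Rs\<^sup>2 + 4 * A * s 1)"
  using assms S_eq[OF assms, of Rs "s 1"] by (simp add: alpha_const_def)

lemma S_ge:
  assumes "A > 0" "Rs > 0" "s1 \<ge> 0"
  shows "sqrt (Rs\<^sup>2 + 4 * A * s1) \<ge> Rs"
  by (metis add_increasing2 assms(1,2,3) less_eq_real_def mult_nonneg_nonneg real_le_rsqrt zero_le_numeral)

lemma S_sq:
  assumes "A > 0" "s1 \<ge> 0"
  shows "(sqrt (Rs\<^sup>2 + 4 * A * s1))\<^sup>2 = Rs\<^sup>2 + 4 * A * s1"
  using assms by simp

lemma Q1_nonneg:
  assumes "A > 0" "Rs > 0" "s 1 \<ge> 0"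
  shows "Qeq A Rs \<gamma> s 1 \<ge> 0"
  unfolding Q1_eq[OF assms(1)] using S_ge[OF assms] assms by simp

lemma Q1_root:
  assumes "A > 0" "Rs > 0" "s 1 \<ge> 0"
  shows "A * (Qeq A Rs \<gamma> s 1)\<^sup>2 + Rs * Qeq A Rs \<gamma> s 1 = s 1"
proof -
  define S where "S = sqrt (Rs\<^sup>2 + 4 * A * s 1)"
  have S2: "S\<^sup>2 = Rs\<^sup>2 + 4 * A * s 1" using assms S_def by simp
  have "A * ((S - Rs) / (2 * A))\<^sup>2 + Rs * ((S - Rs) / (2 * A)) = (S\<^sup>2 - Rs\<^sup>2) / (4*A)"
    using assms by (simp add: field_simps power2_eq_square)
  also have "\<dots> = s 1" using S2 assms by simp
  finally show ?thesis unfolding Q1_eq[OF assms(1)] S_def .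
qed

lemma Q1_unique:
  assumes "A > 0" "Rs > 0" "s 1 \<ge> 0" "q \<ge> 0" "A * q\<^sup>2 + Rs * q = s 1"
  shows "q = Qeq A Rs \<gamma> s 1"
proof -
  define S where "S = sqrt (Rs\<^sup>2 + 4 * A * s 1)"
  have "(2*A*q + Rs)\<^sup>2 = 4*A*(A * q\<^sup>2 + Rs * q) + Rs\<^sup>2"
    by (simp add: power2_eq_square algebra_simps)
  then have "(2*A*q + Rs)\<^sup>2 = Rs\<^sup>2 + 4 * A * s 1" using assms(5) by simp
  then have "2*A*q + Rs = S" unfolding S_def using assms
    by (metis add_nonneg_nonneg less_eq_real_def mult_nonneg_nonneg real_sqrt_abs zero_le_numeral abs_of_nonneg)
  then show ?thesis unfolding Q1_eq[OF assms(1)] using assms by (simp add: S_def field_simps)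
qed



lemma part1:
  assumes A: "A > 0" and R: "Rs > 0" and s: "\<forall>k\<ge>1. s k \<ge> 0"
  shows "is_equilibrium A Rs \<gamma> s (Qeq A Rs \<gamma> s) \<and> nonneg_seq (Qeq A Rs \<gamma> s) \<and>
      (\<forall>q. nonneg_seq q \<and> is_equilibrium A Rs \<gamma> s q \<longrightarrow> (\<forall>k\<ge>1. q k = Qeq A Rs \<gamma> s k))"
proof -
  have s1: "s 1 \<ge> 0" using s by simp
  have r2: "rate Rs \<gamma> 2 > 0" using rate_pos[OF R] by simp
  have Q1r: "A * (Qeq A Rs \<gamma> s 1)\<^sup>2 + Rs * Qeq A Rs \<gamma> s 1 = s 1" by (rule Q1_root[where s=s, OF A R s1])
  have eq: "is_equilibrium A Rs \<gamma> s (Qeq A Rs \<gamma> s)"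
    unfolding is_equilibrium_def
  proof (intro allI impI)
    fix k :: nat assume k: "k \<ge> 1"
    consider "k = 1" | "k = 2" | "k \<ge> 3" using k by linarith
    then show "rhs A Rs \<gamma> s (Qeq A Rs \<gamma> s) k = 0"
    proof cases
      case 1 then show ?thesis using Q1r by (simp add: rhs_def)
    next
      case 2 then show ?thesis using r2 by (simp add: rhs_def Q2_eq field_simps)
    next
      case 3 then show ?thesis using rate_pos[OF R, of k \<gamma>] by (simp add: rhs_def Qk_eq)
    qed
  qed
  have nn: "nonneg_seq (Qeq A Rs \<gamma> s)"
    unfolding nonneg_seq_def
  proof (intro allI impI)
    fix k :: nat assume k: "k \<ge> 1"
    have Q1: "Qeq A Rs \<gamma> s 1 \<ge> 0" by (rule Q1_nonneg[where s=s, OF A R s1])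
    consider "k = 1" | "k = 2" | "k \<ge> 3" using k by linarith
    then show "Qeq A Rs \<gamma> s k \<ge> 0"
    proof cases
      case 1 then show ?thesis using Q1 by simp
    next
      case 2
      have "s 2 \<ge> 0" using s by simp
      have a: "A / (2 * rate Rs \<gamma> 2) \<ge> 0" using A r2 by simp
      have b: "s 2 / rate Rs \<gamma> 2 \<ge> 0" using \<open>s 2 \<ge> 0\<close> r2 by simp
      have "Qeq A Rs \<gamma> s 2 \<ge> 0" unfolding Q2_eq by (rule add_nonneg_nonneg[OF mult_nonneg_nonneg[OF a zero_le_power2] b])
      then show ?thesis using 2 by simp
    next
      case 3 then show ?thesis using rate_pos[OF R, of k \<gamma>] s by (simp add: Qk_eq)
    qed
  qed
  have un: "\<forall>q. nonneg_seq q \<and> is_equilibrium A Rs \<gamma> s q \<longrightarrow> (\<forall>k\<ge>1. q k = Qeq A Rs \<gamma> s k)"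
  proof (intro allI impI)
    fix q k assume h: "nonneg_seq q \<and> is_equilibrium A Rs \<gamma> s q" and k: "(k::nat) \<ge> 1"
    have e: "\<And>j. j \<ge> 1 \<Longrightarrow> rhs A Rs \<gamma> s q j = 0" using h by (simp add: is_equilibrium_def)
    have qn: "\<And>j. j \<ge> 1 \<Longrightarrow> q j \<ge> 0" using h by (simp add: nonneg_seq_def)
    have "A * (q 1)\<^sup>2 + Rs * q 1 = s 1" using e[of 1] by (simp add: rhs_def)
    then have q1: "q 1 = Qeq A Rs \<gamma> s 1" using Q1_unique[where s=s, OF A R s1 qn[of 1]] by simp
    consider "k = 1" | "k = 2" | "k \<ge> 3" using k by linarith
    then show "q k = Qeq A Rs \<gamma> s k"
    proof cases
      case 1 then show ?thesis using q1 by simp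
    next
      case 2 then show ?thesis using e[of 2] q1 r2 by (simp add: rhs_def Q2_eq field_simps)
    next
      case 3 then show ?thesis using e[of k] rate_pos[OF R, of k \<gamma>] by (simp add: rhs_def Qk_eq field_simps)
    qed
  qed
  show ?thesis using eq nn un by blast
qed

lemma aux3: "(Y::real) \<le> X \<Longrightarrow> Y = (S - R) / 2 \<Longrightarrow> 4*R \<le> S \<Longrightarrow> 3*(R::real) \<le> 2*(X::real)"
proof -
  assume "Y \<le> X" "Y = (S - R) / 2" "4*R \<le> S"
  then have "2*Y = S - R" "Y \<le> X" "4*R \<le> S" by simp_all
  then show ?thesis by linarith
qed

lemma part3:
  assumes A: "A > 0" and R: "Rs > 0" and s: "\<forall>k\<ge>1. s k \<ge> 0"
  shows "A * s 1 \<ge> 4 * Rs\<^sup>2 \<longrightarrow>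
      (\<forall>\<mu> \<beta> c. \<mu> \<ge> 1 \<and> 0 \<le> \<beta> \<and> \<beta> \<le> 1 \<and> nonneg_seq c \<and>
         (\<lambda>l. real l powr (\<mu> + \<beta>) * (c l + Qeq A Rs \<gamma> s l)) summable_on {1..} \<longrightarrow>
         2 * A * (C_const \<mu> + 2) * (\<Sum>\<^sub>\<infinity>l\<in>{1..}. real l powr (\<mu> + \<beta>) * (c l + Qeq A Rs \<gamma> s l)) - Rs
           \<ge> (3 * (C_const \<mu> + 2) - 1) * Rs
         \<and> (3 * (C_const \<mu> + 2) - 1) * Rs > 0)"
proof (intro impI allI)
  fix \<mu> \<beta> :: real and c :: "nat \<Rightarrow> real"
  assume big: "A * s 1 \<ge> 4 * Rs\<^sup>2"
  assume h: "\<mu> \<ge> 1 \<and> 0 \<le> \<beta> \<and> \<beta> \<le> 1 \<and> nonneg_seq c \<and>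
         (\<lambda>l. real l powr (\<mu> + \<beta>) * (c l + Qeq A Rs \<gamma> s l)) summable_on {1..}"
  have s1: "s 1 \<ge> 0" using s by simp
  define S where "S = sqrt (Rs\<^sup>2 + 4 * A * s 1)"
  have S2: "S\<^sup>2 = Rs\<^sup>2 + 4 * A * s 1" using A s1 S_def by simp
  have "0 \<le> Rs * Rs" by simp
  moreover have "(4*Rs)\<^sup>2 = 16 * (Rs * Rs)" "Rs\<^sup>2 = Rs * Rs" by (simp_all add: power2_eq_square)
  ultimately have "(4*Rs)\<^sup>2 \<le> S\<^sup>2" using S2 big by linarith
  then have S4: "4 * Rs \<le> S" using power2_le_imp_le[of "4*Rs" S] A s1 unfolding S_def by simp
  have AQ: "A * Qeq A Rs \<gamma> s 1 = (S - Rs)/2" using A unfolding Q1_eq[OF A] S_def by (simp add: field_simps)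
  have C0: "C_const \<mu> \<ge> 0" using h unfolding C_const_def by (intro mult_nonneg_nonneg) auto
  have QN: "nonneg_seq (Qeq A Rs \<gamma> s)" using part1[OF A R s] by blast
  let ?f = "\<lambda>l. real l powr (\<mu> + \<beta>) * (c l + Qeq A Rs \<gamma> s l)"
  have nn: "\<And>l. l \<in> {1..} \<Longrightarrow> ?f l \<ge> 0" using h QN by (simp add: nonneg_seq_def)
  have "(\<Sum>\<^sub>\<infinity>l\<in>{1::nat}. ?f l) \<le> (\<Sum>\<^sub>\<infinity>l\<in>{1..}. ?f l)"
    by (rule infsum_mono_neutral) (use h nn in auto)
  then have "c 1 + Qeq A Rs \<gamma> s 1 \<le> (\<Sum>\<^sub>\<infinity>l\<in>{1..}. ?f l)" by simp
  moreover have "c 1 \<ge> 0" using h by (simp add: nonneg_seq_def)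
  ultimately have "Qeq A Rs \<gamma> s 1 \<le> (\<Sum>\<^sub>\<infinity>l\<in>{1..}. ?f l)" by linarith
  then have "A * Qeq A Rs \<gamma> s 1 \<le> A * (\<Sum>\<^sub>\<infinity>l\<in>{1..}. ?f l)" using A by simp
  then have "3 * Rs \<le> 2 * (A * (\<Sum>\<^sub>\<infinity>l\<in>{1..}. ?f l))" 
    using aux3[OF _ AQ S4] by blast
  then have "3 * Rs \<le> 2 * A * (\<Sum>\<^sub>\<infinity>l\<in>{1..}. ?f l)" by (simp add: mult.assoc)
  then have "(C_const \<mu> + 2) * (3 * Rs) \<le> (C_const \<mu> + 2) * (2 * A * (\<Sum>\<^sub>\<infinity>l\<in>{1..}. ?f l))"
    using C0 by (intro mult_left_mono) auto
  then have I: "2 * A * (C_const \<mu> + 2) * (\<Sum>\<^sub>\<infinity>l\<in>{1..}. ?f l) - Rs \<ge> (3 * (C_const \<mu> + 2) - 1) * Rs"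
    by (simp add: algebra_simps)
  have "(3 * (C_const \<mu> + 2) - 1) * Rs > 0" using C0 R by (intro mult_pos_pos) auto
  with I show "2 * A * (C_const \<mu> + 2) * (\<Sum>\<^sub>\<infinity>l\<in>{1..}. ?f l) - Rs \<ge> (3 * (C_const \<mu> + 2) - 1) * Rs
         \<and> (3 * (C_const \<mu> + 2) - 1) * Rs > 0" by blast
qed



lemma d1_decay:
  fixes x :: "real \<Rightarrow> real"
  assumes d: "\<And>t. t \<ge> 0 \<Longrightarrow> (x has_real_derivative (-A*(x t)\<^sup>2 + s1 - Rs * x t)) (at t within {0..})"
    and nn: "\<And>t. t \<ge> 0 \<Longrightarrow> x t \<ge> 0" and A: "A > 0" and Q: "A*Q\<^sup>2 + Rs*Q = s1" and t: "t \<ge> 0"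
  shows "(x t - Q)\<^sup>2 * exp (2*(A*Q+Rs)*t) \<le> (x 0 - Q)\<^sup>2"
proof -
  let ?a = "A*Q+Rs"
  have "(\<lambda>\<tau>. (x \<tau> - Q)\<^sup>2 * exp (2 * ?a * \<tau>)) t \<le> (\<lambda>\<tau>. (x \<tau> - Q)\<^sup>2 * exp (2 * ?a * \<tau>)) 0"
  proof (rule decr0[OF _ _ t])
    fix t :: real assume t: "t \<ge> 0"
    show "((\<lambda>\<tau>. (x \<tau> - Q)\<^sup>2 * exp (2 * ?a * \<tau>)) has_real_derivative
       exp (2*?a*t) * (2 * (x t - Q) * (-A*(x t)\<^sup>2 + s1 - Rs * x t) + 2 * ?a * (x t - Q)\<^sup>2)) (at t within {0..})"
      by (rule sq_exp_deriv[OF d[OF t]])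
    have e: "2 * (x t - Q) * (-A*(x t)\<^sup>2 + s1 - Rs * x t) + 2 * ?a * (x t - Q)\<^sup>2 = - 2 * A * x t * (x t - Q)\<^sup>2"
      unfolding Q[symmetric] by (simp add: power2_eq_square algebra_simps)
    have "- 2 * A * x t * (x t - Q)\<^sup>2 \<le> 0" using A nn[OF t]
      by (simp add: mult_nonneg_nonneg)
    then show "exp (2*?a*t) * (2 * (x t - Q) * (-A*(x t)\<^sup>2 + s1 - Rs * x t) + 2 * ?a * (x t - Q)\<^sup>2) \<le> 0"
      unfolding e by (simp add: mult_nonneg_nonpos)
  qed
  then show ?thesis by simp
qed

lemma lin_decay:
  fixes x :: "real \<Rightarrow> real"
  assumes d: "\<And>t. t \<ge> 0 \<Longrightarrow> (x has_real_derivative (sk - r * x t)) (at t within {0..})"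
    and Q: "sk = r * Q" and t: "t \<ge> 0"
  shows "(x t - Q)\<^sup>2 * exp (2*r*t) \<le> (x 0 - Q)\<^sup>2"
proof -
  have "(\<lambda>\<tau>. (x \<tau> - Q)\<^sup>2 * exp (2 * r * \<tau>)) t \<le> (\<lambda>\<tau>. (x \<tau> - Q)\<^sup>2 * exp (2 * r * \<tau>)) 0"
  proof (rule decr0[OF _ _ t])
    fix t :: real assume t: "t \<ge> 0"
    show "((\<lambda>\<tau>. (x \<tau> - Q)\<^sup>2 * exp (2 * r * \<tau>)) has_real_derivative
       exp (2*r*t) * (2 * (x t - Q) * (sk - r * x t) + 2 * r * (x t - Q)\<^sup>2)) (at t within {0..})"
      by (rule sq_exp_deriv[OF d[OF t]])
    have e: "2 * (x t - Q) * (sk - r * x t) + 2 * r * (x t - Q)\<^sup>2 = 0"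
      unfolding Q by (simp add: power2_eq_square algebra_simps)
    show "exp (2*r*t) * (2 * (x t - Q) * (sk - r * x t) + 2 * r * (x t - Q)\<^sup>2) \<le> 0"
      unfolding e by simp
  qed
  then show ?thesis by simp
qed



lemma d2_decay:
  fixes u w :: "real \<Rightarrow> real"
  assumes d: "\<And>t. t \<ge> 0 \<Longrightarrow> (w has_real_derivative (A/2*(u t)\<^sup>2 + s2 - r2 * w t)) (at t within {0..})"
    and nn: "\<And>t. t \<ge> 0 \<Longrightarrow> u t \<ge> 0"
    and b1: "\<And>t. t \<ge> 0 \<Longrightarrow> \<bar>u t - Q1\<bar> \<le> D1 * exp (- a * t)"
    and A: "A > 0" and r2: "r2 > 0" and Q1: "Q1 \<ge> 0" and D1: "D1 \<ge> 0" and a0: "a \<ge> 0"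
    and Q2: "s2 = r2 * Q2 - A/2 * Q1\<^sup>2"
    and k1: "\<kappa> \<le> r2/2" and k2: "\<kappa> < a"
    and t: "t \<ge> 0"
  shows "(w t - Q2)\<^sup>2 * exp (2*\<kappa>*t) \<le> (w 0 - Q2)\<^sup>2 + ((A/2)\<^sup>2*(D1+2*Q1)\<^sup>2*D1\<^sup>2/r2) / (2*(a-\<kappa>))"
proof -
  define L where "L = (A/2)\<^sup>2*(D1+2*Q1)\<^sup>2*D1\<^sup>2/r2"
  define C where "C = L / (2*(a-\<kappa>))"
  have L0: "L \<ge> 0" unfolding L_def using r2 by simp
  have C0: "C \<ge> 0" unfolding C_def using L0 k2 by simp
  let ?f = "\<lambda>\<tau>. (w \<tau> - Q2)\<^sup>2 * exp (2 * \<kappa> * \<tau>) + C * exp (2*(\<kappa>-a)*\<tau>)"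
  have "?f t \<le> ?f 0"
  proof (rule decr0[OF _ _ t])
    fix t :: real assume t: "t \<ge> 0"
    let ?D = "A/2*(u t)\<^sup>2 + s2 - r2 * w t"
    have e1: "((\<lambda>\<tau>. C * exp (2*(\<kappa>-a)*\<tau>)) has_real_derivative C * (exp (2*(\<kappa>-a)*t) * (2*(\<kappa>-a)))) (at t within {0..})"
      by (auto intro!: derivative_eq_intros)
    show "(?f has_real_derivative
       exp (2*\<kappa>*t) * (2 * (w t - Q2) * ?D + 2 * \<kappa> * (w t - Q2)\<^sup>2) + C * (exp (2*(\<kappa>-a)*t) * (2*(\<kappa>-a)))) (at t within {0..})"
      by (rule DERIV_add[OF sq_exp_deriv[OF d[OF t]] e1])
    define d2 where "d2 = w t - Q2"
    define g where "g = A/2 * ((u t)\<^sup>2 - Q1\<^sup>2)"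
    have De: "?D = g - r2 * d2" unfolding g_def d2_def Q2 by (simp add: algebra_simps)
    have sq: "0 \<le> (g - r2*d2)\<^sup>2" by simp
    have "r2 * (2 * d2 * g - r2 * d2\<^sup>2) \<le> g\<^sup>2" using sq by (simp add: power2_eq_square algebra_simps)
    then have i1: "2 * d2 * g - r2 * d2\<^sup>2 \<le> g\<^sup>2 / r2" using r2 by (simp add: field_simps)
    have i2: "2 * d2 * ?D + 2 * \<kappa> * d2\<^sup>2 \<le> 2 * d2 * g - r2 * d2\<^sup>2"
    proof -
      have "2 * \<kappa> * d2\<^sup>2 \<le> r2 * d2\<^sup>2" using k1 by (intro mult_right_mono) auto
      moreover have "2 * d2 * (g - r2 * d2) = 2 * d2 * g - 2 * r2 * d2\<^sup>2" by (simp add: power2_eq_square algebra_simps)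
      ultimately show ?thesis unfolding De by linarith
    qed
    have bt: "\<bar>u t - Q1\<bar> \<le> D1 * exp (- a * t)" by (rule b1[OF t])
    have "exp (- a * t) \<le> 1" using a0 t by simp
    then have "D1 * exp (- a * t) \<le> D1" using D1 by (simp add: mult_left_le)
    then have bt1: "\<bar>u t - Q1\<bar> \<le> D1" using bt by linarith
    have g2: "g\<^sup>2 = (A/2)\<^sup>2 * (u t + Q1)\<^sup>2 * (u t - Q1)\<^sup>2"
    proof -
      have "(u t)\<^sup>2 - Q1\<^sup>2 = (u t+Q1)*(u t-Q1)" by (simp add: power2_eq_square algebra_simps)
      then have "g\<^sup>2 = (A/2 * ((u t+Q1)*(u t-Q1)))\<^sup>2" unfolding g_def by simp
      also have "\<dots> = (A/2)\<^sup>2 * (u t + Q1)\<^sup>2 * (u t - Q1)\<^sup>2" by (simp only: power_mult_distrib mult.assoc)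
      finally show ?thesis .
    qed
    have p1: "(u t + Q1)\<^sup>2 \<le> (D1 + 2*Q1)\<^sup>2"
      using nn[OF t] Q1 bt1 by (intro power_mono) auto
    have p2: "(u t - Q1)\<^sup>2 \<le> (D1 * exp (- a * t))\<^sup>2"
      using bt by (metis abs_ge_zero power2_abs power_mono)
    have "g\<^sup>2 \<le> (A/2)\<^sup>2 * (D1 + 2*Q1)\<^sup>2 * (D1 * exp (- a * t))\<^sup>2"
      unfolding g2 using p1 p2 by (intro mult_mono) auto
    then have "g\<^sup>2 / r2 \<le> L * (exp (- a * t))\<^sup>2" using r2 unfolding L_def
      by (simp add: field_simps power_mult_distrib)
    also have "(exp (- a * t))\<^sup>2 = exp (-2*a*t)" by (simp flip: exp_add add: power2_eq_square)
    finally have i3: "2 * d2 * ?D + 2 * \<kappa> * d2\<^sup>2 \<le> L * exp (-2*a*t)" using i1 i2 by linarith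
    have "exp (2*\<kappa>*t) * (2 * d2 * ?D + 2 * \<kappa> * d2\<^sup>2) \<le> exp (2*\<kappa>*t) * (L * exp (-2*a*t))"
      using i3 by simp
    also have "\<dots> = L * exp (2*(\<kappa>-a)*t)" by (simp flip: exp_add add: algebra_simps)
    finally have i4: "exp (2*\<kappa>*t) * (2 * d2 * ?D + 2 * \<kappa> * d2\<^sup>2) \<le> L * exp (2*(\<kappa>-a)*t)" .
    have e5: "C * (exp (2*(\<kappa>-a)*t) * (2*(\<kappa>-a))) = - L * exp (2*(\<kappa>-a)*t)"
      unfolding C_def using k2 by (simp add: field_simps)
    show "exp (2*\<kappa>*t) * (2 * (w t - Q2) * ?D + 2 * \<kappa> * (w t - Q2)\<^sup>2) + C * (exp (2*(\<kappa>-a)*t) * (2*(\<kappa>-a))) \<le> 0"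
      using i4 e5 unfolding d2_def by linarith
  qed
  moreover have "0 \<le> C * exp (2*(\<kappa>-a)*t)" using C0 by simp
  ultimately have "(w t - Q2)\<^sup>2 * exp (2*\<kappa>*t) \<le> (w 0 - Q2)\<^sup>2 + C" by simp
  then show ?thesis unfolding C_def L_def .
qed



lemma polyexp:
  fixes b \<gamma> p :: real
  assumes b: "b > 0" and g: "\<gamma> > 0"
  shows "\<exists>M\<ge>0. \<forall>x::real. x \<ge> 1 \<longrightarrow> x powr p * exp (-(b * x powr \<gamma>)) \<le> M"
proof -
  define n :: nat where "n = nat \<lceil>p/\<gamma>\<rceil> + 1"
  have n1: "n \<ge> 1" unfolding n_def by simp
  have pn: "p \<le> real n * \<gamma>"
  proof -
    have "p/\<gamma> \<le> real n" unfolding n_def by linarith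
    then show ?thesis using g by (simp add: field_simps)
  qed
  show ?thesis
  proof (intro exI[of _ "(real n / b)^n"] conjI allI impI)
    show "(real n / b)^n \<ge> 0" using b by simp
    fix x :: real assume x: "x \<ge> 1"
    define y where "y = b * x powr \<gamma>"
    have y0: "y \<ge> 0" unfolding y_def using b by simp
    have "exp y = exp (y / real n) ^ n"
      using n1 by (simp add: exp_of_nat_mult[symmetric])
    moreover have "y / real n \<le> exp (y / real n)"
      by (meson exp_ge_add_one_self le_add_same_cancel2 order_trans zero_le_one)
    ultimately have ey: "(y / real n) ^ n \<le> exp y"
      using y0 by (metis divide_nonneg_nonneg of_nat_0_le_iff power_mono)
    have le1: "x powr p \<le> x powr (real n * \<gamma>)" using x pn by (simp add: powr_mono)
    have e1: "x powr (real n * \<gamma>) = (x powr \<gamma>) ^ n" using x by (simp add: powr_powr[symmetric] powr_realpow mult.commute)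
    have e2: "x powr \<gamma> = real n / b * (y / real n)" unfolding y_def using b n1 by (simp add: field_simps)
    have e3: "(x powr \<gamma>) ^ n = (real n / b)^n * (y / real n) ^ n" by (simp only: e2 power_mult_distrib)
    have "(real n / b)^n * (y / real n) ^ n \<le> (real n / b)^n * exp y" using ey b by (intro mult_left_mono) auto
    then have "x powr p \<le> (real n / b)^n * exp y" using le1 unfolding e1 e3 by linarith
    then show "x powr p * exp (-(b * x powr \<gamma>)) \<le> (real n / b)^n"
      unfolding y_def[symmetric] by (simp add: exp_minus field_simps)
  qed
qed


lemma rhs1: "rhs A Rs \<gamma> s c 1 = -A*(c 1)\<^sup>2 + s 1 - Rs * c 1" by (simp add: rhs_def)
lemma rhs2: "rhs A Rs \<gamma> s c 2 = A/2*(c 1)\<^sup>2 + s 2 - rate Rs \<gamma> 2 * c 2" by (simp add: rhs_def)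
lemma rhsk: "k \<ge> 3 \<Longrightarrow> rhs A Rs \<gamma> s c k = s k - rate Rs \<gamma> k * c k" by (simp add: rhs_def)

lemma part2:
  assumes A: "A > 0" and R: "Rs > 0" and g: "\<gamma> > 0" and s: "\<forall>k\<ge>1. s k \<ge> 0"
    and smom: "\<forall>\<mu>\<ge>0. (\<lambda>k. real k powr \<mu> * s k) summable_on {1..}"
  shows "\<forall>cin \<mu>. nonneg_seq cin \<and> (\<lambda>k. real k * cin k) summable_on {1..} \<and> \<mu> \<ge> 1 \<longrightarrow>
       (\<exists>K. \<forall>c. is_solution A Rs \<gamma> s cin c \<longrightarrow>
          (\<forall>t\<ge>1. (\<lambda>k. real k powr \<mu> * \<bar>c t k - Qeq A Rs \<gamma> s k\<bar>) summable_on {1..} \<and>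
                  (\<Sum>\<^sub>\<infinity>k\<in>{1..}. real k powr \<mu> * \<bar>c t k - Qeq A Rs \<gamma> s k\<bar>)
                    \<le> K * exp (- kappa_const A Rs \<gamma> s * t)))"
proof (intro allI impI)
  fix cin :: "nat \<Rightarrow> real" and \<mu> :: real
  assume h: "nonneg_seq cin \<and> (\<lambda>k. real k * cin k) summable_on {1..} \<and> \<mu> \<ge> 1"
  have cin0: "\<And>k. k \<ge> 1 \<Longrightarrow> cin k \<ge> 0" using h by (simp add: nonneg_seq_def)
  have cinsum: "(\<lambda>k. real k * cin k) summable_on {1..}" using h by simp
  have mu1: "\<mu> \<ge> 1" using h by simp
  have s1: "s 1 \<ge> 0" using s by simp
  define Q where "Q = Qeq A Rs \<gamma> s"
  define S where "S = sqrt (Rs\<^sup>2 + 4 * A * s 1)"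
  define \<kappa> where "\<kappa> = kappa_const A Rs \<gamma> s"
  define a where "a = A * Q 1 + Rs"
  define r2 where "r2 = rate Rs \<gamma> 2"
  have SR: "S \<ge> Rs" unfolding S_def by (rule S_ge[OF A R s1])
  have Q1e: "Q 1 = (S - Rs)/(2*A)" unfolding Q_def Q1_eq[OF A] S_def by simp
  have AQ: "A * Q 1 = (S - Rs)/2" unfolding Q1e using A by simp
  have Spos: "S > 0" using SR R by linarith
  have kap: "\<kappa> = min (S/2) (min (r2/2) (3 powr \<gamma> / 2 * Rs))"
    unfolding \<kappa>_def kappa_const_def alpha_eq[OF A] S_def[symmetric] r2_def using A Spos by simp
  have r2pos: "r2 > 0" unfolding r2_def using rate_pos[OF R, of 2 \<gamma>] by simp
  have kS: "\<kappa> \<le> S/2" and kr2: "\<kappa> \<le> r2/2" and k3: "\<kappa> \<le> 3 powr \<gamma> / 2 * Rs" unfolding kap by auto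
  have kpos: "\<kappa> > 0" unfolding kap using Spos r2pos R by simp
  have a_eq: "a = S/2 + Rs/2" unfolding a_def AQ by (simp add: field_simps)
  have ka: "\<kappa> < a" using kS a_eq R by linarith
  have a0: "a \<ge> 0" using ka kpos by linarith
  have rk: "\<And>k. k \<ge> 3 \<Longrightarrow> 2 * \<kappa> \<le> rate Rs \<gamma> k"
  proof -
    fix k :: nat assume k: "k \<ge> 3"
    have "rate Rs \<gamma> 3 \<le> rate Rs \<gamma> k" by (rule rate_mono[OF R g]) (use k in auto)
    moreover have "rate Rs \<gamma> 3 = 3 powr \<gamma> * Rs" by (simp add: rate_def)
    ultimately show "2 * \<kappa> \<le> rate Rs \<gamma> k" using k3 by linarith
  qed
  have Q1nn: "Q 1 \<ge> 0" unfolding Q_def by (rule Q1_nonneg[where s=s, OF A R s1])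
  have Qnn: "\<And>k. k \<ge> 1 \<Longrightarrow> Q k \<ge> 0" using part1[OF A R s] unfolding Q_def nonneg_seq_def by blast
  have Q1r: "A * (Q 1)\<^sup>2 + Rs * Q 1 = s 1" unfolding Q_def by (rule Q1_root[where s=s, OF A R s1])
  have Q2r: "s 2 = r2 * Q 2 - A/2 * (Q 1)\<^sup>2" unfolding Q_def Q2_eq r2_def[symmetric] using r2pos
    by (simp add: field_simps)
  have Qkr: "\<And>k. k \<ge> 3 \<Longrightarrow> s k = rate Rs \<gamma> k * Q k"
  proof -
    fix k :: nat assume k: "k \<ge> 3"
    have "rate Rs \<gamma> k > 0" using rate_pos[OF R, of k \<gamma>] k by simp
    then show "s k = rate Rs \<gamma> k * Q k" unfolding Q_def Qk_eq[OF k] by simp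
  qed
  define D1 where "D1 = \<bar>cin 1 - Q 1\<bar>"
  define G0 where "G0 = (cin 2 - Q 2)\<^sup>2 + ((A/2)\<^sup>2*(D1+2*Q 1)\<^sup>2*D1\<^sup>2/r2) / (2*(a-\<kappa>))"
  have D10: "D1 \<ge> 0" unfolding D1_def by simp
  have G00: "G0 \<ge> 0" unfolding G0_def using r2pos ka by (intro add_nonneg_nonneg divide_nonneg_nonneg) auto
  obtain M where M0: "M \<ge> 0" and Mb: "\<And>x::real. x \<ge> 1 \<Longrightarrow> x powr (\<mu>-1) * exp (-(Rs/2 * x powr \<gamma>)) \<le> M"
    using polyexp[of "Rs/2" \<gamma> "\<mu>-1"] R g by auto
  define B where "B = max D1 (2 powr \<mu> * sqrt G0)"
  define hf where "hf = (\<lambda>k::nat. (if k \<le> 2 then B else 0) + M * (real k * cin k) + 1/Rs * (real k powr \<mu> * s k))"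
  have B0: "B \<ge> 0" unfolding B_def using D10 by simp
  have hnn: "\<And>k. k \<ge> 1 \<Longrightarrow> hf k \<ge> 0" unfolding hf_def using B0 M0 cin0 s R by (auto intro!: add_nonneg_nonneg mult_nonneg_nonneg)
  have hB: "\<And>k. 1 \<le> k \<Longrightarrow> k \<le> 2 \<Longrightarrow> B \<le> hf k" unfolding hf_def using B0 M0 cin0 s R
    by (auto intro!: add_nonneg_nonneg mult_nonneg_nonneg)
  have hsum: "hf summable_on {1..}"
  proof -
    have f1: "(\<lambda>k::nat. if k \<le> 2 then B else 0) summable_on {1..}"
    proof -
      have "(\<lambda>k::nat. if k \<le> 2 then B else 0) summable_on {1,2}" by simp
      moreover have "(\<lambda>k::nat. if k \<le> 2 then B else 0) summable_on {1,2} \<longleftrightarrow> (\<lambda>k::nat. if k \<le> 2 then B else 0) summable_on {1..}"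
        by (rule summable_on_cong_neutral) auto
      ultimately show ?thesis by simp
    qed
    have f2: "(\<lambda>k. M * (real k * cin k)) summable_on {1..}" by (rule summable_on_cmult_right[OF cinsum])
    have f3: "(\<lambda>k. 1/Rs * (real k powr \<mu> * s k)) summable_on {1..}" using smom mu1 by (intro summable_on_cmult_right) auto
    show ?thesis unfolding hf_def by (intro summable_on_add f1 f2 f3)
  qed
  show "\<exists>K. \<forall>c. is_solution A Rs \<gamma> s cin c \<longrightarrow>
          (\<forall>t\<ge>1. (\<lambda>k. real k powr \<mu> * \<bar>c t k - Qeq A Rs \<gamma> s k\<bar>) summable_on {1..} \<and>
                  (\<Sum>\<^sub>\<infinity>k\<in>{1..}. real k powr \<mu> * \<bar>c t k - Qeq A Rs \<gamma> s k\<bar>)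
                    \<le> K * exp (- kappa_const A Rs \<gamma> s * t))"
  proof (intro exI[of _ "infsum hf {1..}"] allI impI)
    fix c :: "real \<Rightarrow> nat \<Rightarrow> real" and t :: real
    assume sol: "is_solution A Rs \<gamma> s cin c" and t1: "t \<ge> 1"
    have t0: "t \<ge> 0" using t1 by simp
    have c0: "\<And>k. k \<ge> 1 \<Longrightarrow> c 0 k = cin k" using sol by (simp add: is_solution_def)
    have cnn: "\<And>\<tau> k. \<tau> \<ge> 0 \<Longrightarrow> k \<ge> 1 \<Longrightarrow> c \<tau> k \<ge> 0" using sol by (simp add: is_solution_def)
    have cd: "\<And>\<tau> k. \<tau> \<ge> 0 \<Longrightarrow> k \<ge> 1 \<Longrightarrow> ((\<lambda>\<tau>. c \<tau> k) has_real_derivative rhs A Rs \<gamma> s (c \<tau>) k) (at \<tau> within {0..})"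
      using sol by (simp add: is_solution_def)
    have cd1: "\<And>\<tau>. \<tau> \<ge> 0 \<Longrightarrow> ((\<lambda>\<tau>. c \<tau> 1) has_real_derivative (-A*(c \<tau> 1)\<^sup>2 + s 1 - Rs * c \<tau> 1)) (at \<tau> within {0..})"
      using cd[of _ 1] unfolding rhs1 by simp
    have cd2: "\<And>\<tau>. \<tau> \<ge> 0 \<Longrightarrow> ((\<lambda>\<tau>. c \<tau> 2) has_real_derivative (A/2*(c \<tau> 1)\<^sup>2 + s 2 - r2 * c \<tau> 2)) (at \<tau> within {0..})"
      using cd[of _ 2] unfolding rhs2 r2_def by simp
    have b1: "\<And>\<tau>. \<tau> \<ge> 0 \<Longrightarrow> \<bar>c \<tau> 1 - Q 1\<bar> \<le> D1 * exp (- a * \<tau>)"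
    proof -
      fix \<tau> :: real assume \<tau>: "\<tau> \<ge> 0"
      have "(c \<tau> 1 - Q 1)\<^sup>2 * exp (2*(A*Q 1+Rs)*\<tau>) \<le> (c 0 1 - Q 1)\<^sup>2"
        by (rule d1_decay[where x="\<lambda>\<tau>. c \<tau> 1", OF cd1 _ A Q1r \<tau>]) (use cnn in auto)
      then have "(c \<tau> 1 - Q 1)\<^sup>2 * exp (2*a*\<tau>) \<le> D1\<^sup>2" unfolding a_def D1_def using c0[of 1] by simp
      then show "\<bar>c \<tau> 1 - Q 1\<bar> \<le> D1 * exp (- a * \<tau>)" by (rule sqrt_bound[OF _ D10])
    qed
    have bd2: "\<bar>c t 2 - Q 2\<bar> \<le> sqrt G0 * exp (- \<kappa> * t)"
    proof -
      have "(c t 2 - Q 2)\<^sup>2 * exp (2*\<kappa>*t) \<le> (c 0 2 - Q 2)\<^sup>2 + ((A/2)\<^sup>2*(D1+2*Q 1)\<^sup>2*D1\<^sup>2/r2) / (2*(a-\<kappa>))"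
        by (rule d2_decay[where u="\<lambda>\<tau>. c \<tau> 1" and w="\<lambda>\<tau>. c \<tau> 2", OF cd2 _ b1 A r2pos Q1nn D10 a0 Q2r kr2 ka t0])
          (use cnn in auto)
      then have "(c t 2 - Q 2)\<^sup>2 * exp (2*\<kappa>*t) \<le> (sqrt G0)\<^sup>2" unfolding G0_def using c0[of 2] G00 G0_def by simp
      then show ?thesis by (rule sqrt_bound) (use G00 in simp)
    qed
    have bk: "\<And>k. k \<ge> 3 \<Longrightarrow> \<bar>c t k - Q k\<bar> \<le> \<bar>cin k - Q k\<bar> * exp (- rate Rs \<gamma> k * t)"
    proof -
      fix k :: nat assume k: "k \<ge> 3"
      have "(c t k - Q k)\<^sup>2 * exp (2*rate Rs \<gamma> k*t) \<le> (c 0 k - Q k)\<^sup>2"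
        by (rule lin_decay[where x="\<lambda>\<tau>. c \<tau> k", OF _ Qkr[OF k] t0]) (use cd[of _ k] k rhsk[OF k] in auto)
      then have "(c t k - Q k)\<^sup>2 * exp (2*rate Rs \<gamma> k*t) \<le> (\<bar>cin k - Q k\<bar>)\<^sup>2" using c0[of k] k by simp
      then show "\<bar>c t k - Q k\<bar> \<le> \<bar>cin k - Q k\<bar> * exp (- rate Rs \<gamma> k * t)" by (rule sqrt_bound) simp
    qed
    have ek: "exp (- \<kappa> * t) > 0" by simp
    have fb: "\<And>k. k \<ge> 1 \<Longrightarrow> real k powr \<mu> * \<bar>c t k - Q k\<bar> \<le> exp (- \<kappa> * t) * hf k"
    proof -
      fix k :: nat assume k: "k \<ge> 1"
      consider "k = 1" | "k = 2" | "k \<ge> 3" using k by linarith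
      then show "real k powr \<mu> * \<bar>c t k - Q k\<bar> \<le> exp (- \<kappa> * t) * hf k"
      proof cases
        case 1
        have "exp (- a * t) \<le> exp (- \<kappa> * t)" using ka t0 by (simp add: mult_right_mono)
        then have "D1 * exp (- a * t) \<le> B * exp (- \<kappa> * t)"
          using D10 unfolding B_def by (intro mult_mono) auto
        also have "\<dots> \<le> hf 1 * exp (- \<kappa> * t)" using hB[of 1] by (intro mult_right_mono) auto
        finally show ?thesis using b1[OF t0] 1 by (simp add: mult.commute)
      next
        case 2
        have "2 powr \<mu> * \<bar>c t 2 - Q 2\<bar> \<le> 2 powr \<mu> * (sqrt G0 * exp (- \<kappa> * t))"
          using bd2 by (intro mult_left_mono) auto
        also have "\<dots> = (2 powr \<mu> * sqrt G0) * exp (- \<kappa> * t)" by simp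
        also have "\<dots> \<le> B * exp (- \<kappa> * t)" unfolding B_def by (intro mult_right_mono) auto
        also have "\<dots> \<le> hf 2 * exp (- \<kappa> * t)" using hB[of 2] by (intro mult_right_mono) auto
        finally show ?thesis using 2 by (simp add: mult.commute)
      next
        case 3
        define r where "r = rate Rs \<gamma> k"
        define X where "X = real k"
        have X1: "X \<ge> 1" unfolding X_def using k by simp
        have r2k: "2 * \<kappa> \<le> r" unfolding r_def by (rule rk[OF 3])
        have rR: "Rs \<le> r" unfolding r_def by (rule rate_ge[OF R g k])
        have rX: "r = Rs * X powr \<gamma>" unfolding r_def X_def rate_def ..
        have Qk: "Q k = s k / r" unfolding Q_def r_def using 3 by (rule Qk_eq)
        have sk: "s k \<ge> 0" using s k by simp
        have ck: "cin k \<ge> 0" by (rule cin0[OF k])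
        have Qk0: "Q k \<ge> 0" by (rule Qnn[OF k])
        have "X powr \<mu> * \<bar>c t k - Q k\<bar> \<le> X powr \<mu> * ((cin k + Q k) * exp (- r * t))"
        proof (intro mult_left_mono)
          have "\<bar>cin k - Q k\<bar> \<le> cin k + Q k" using ck Qk0 by linarith
          then show "\<bar>c t k - Q k\<bar> \<le> (cin k + Q k) * exp (- r * t)"
            using bk[OF 3] unfolding r_def by (meson exp_ge_zero mult_right_mono order_trans)
        qed simp
        also have "\<dots> = X powr \<mu> * cin k * exp (- r * t) + X powr \<mu> * Q k * exp (- r * t)"
          by (simp add: algebra_simps)
        also have "X powr \<mu> * cin k * exp (- r * t) \<le> M * (X * cin k) * exp (- \<kappa> * t)"
        proof -
          have pw: "X powr \<mu> = X * X powr (\<mu> - 1)"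
          proof -
            have "X powr \<mu> = X powr (1 + (\<mu> - 1))" by simp
            also have "\<dots> = X powr 1 * X powr (\<mu> - 1)" by (rule powr_add)
            finally show ?thesis using X1 by simp
          qed
          have ex: "exp (- r * t) = exp (-(Rs/2 * X powr \<gamma>)) * exp (-(r * t - r/2))"
            unfolding rX by (simp flip: exp_add add: algebra_simps)
          have "r * (t - 1/2) \<ge> 2 * \<kappa> * (t - 1/2)" using r2k t1 by (intro mult_right_mono) auto
          moreover have "\<kappa> * t \<ge> \<kappa>" using kpos t1 by simp
          ultimately have "\<kappa> * t \<le> r * t - r/2" by (simp add: algebra_simps)
          then have e2: "exp (-(r * t - r/2)) \<le> exp (- \<kappa> * t)" by simp
          have "X powr \<mu> * cin k * exp (- r * t) = (X * cin k) * (X powr (\<mu> - 1) * exp (-(Rs/2 * X powr \<gamma>))) * exp (-(r * t - r/2))"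
            unfolding pw ex by (simp add: algebra_simps)
          also have "\<dots> \<le> (X * cin k) * M * exp (- \<kappa> * t)"
            using Mb[OF X1] e2 X1 ck M0 by (intro mult_mono) auto
          finally show ?thesis by (simp add: algebra_simps)
        qed
        also have "X powr \<mu> * Q k * exp (- r * t) \<le> 1/Rs * (X powr \<mu> * s k) * exp (- \<kappa> * t)"
        proof -
          have "X powr \<mu> * Q k = X powr \<mu> * s k / r" unfolding Qk by simp
          also have "\<dots> \<le> X powr \<mu> * s k / Rs" using rR R sk by (intro divide_left_mono) auto
          finally have a1: "X powr \<mu> * Q k \<le> 1/Rs * (X powr \<mu> * s k)" by simp
          have "\<kappa> \<le> r" using r2k kpos by linarith
          then have a2: "exp (- r * t) \<le> exp (- \<kappa> * t)" using t0 by (simp add: mult_right_mono)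
          show ?thesis by (rule mult_mono[OF a1 a2]) (use R sk X1 in auto)
        qed
        finally have "X powr \<mu> * \<bar>c t k - Q k\<bar> \<le> exp (- \<kappa> * t) * (M * (X * cin k) + 1/Rs * (X powr \<mu> * s k))"
          by (simp add: algebra_simps)
        then show ?thesis unfolding hf_def X_def using 3 by simp
      qed
    qed
    have fnn: "\<And>k. k \<in> {1..} \<Longrightarrow> 0 \<le> real k powr \<mu> * \<bar>c t k - Q k\<bar>" by simp
    have hs2: "(\<lambda>k. exp (- \<kappa> * t) * hf k) summable_on {1..}" by (rule summable_on_cmult_right[OF hsum])
    have fs: "(\<lambda>k. real k powr \<mu> * \<bar>c t k - Q k\<bar>) summable_on {1..}"
      by (rule summable_on_comparison_test[OF hs2]) (use fb in auto)
    have "(\<Sum>\<^sub>\<infinity>k\<in>{1..}. real k powr \<mu> * \<bar>c t k - Q k\<bar>) \<le> (\<Sum>\<^sub>\<infinity>k\<in>{1..}. exp (- \<kappa> * t) * hf k)"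
      by (rule infsum_mono[OF fs hs2]) (use fb in auto)
    also have "\<dots> = exp (- \<kappa> * t) * infsum hf {1..}" by (rule infsum_cmult_right')
    also have "\<dots> = infsum hf {1..} * exp (- \<kappa> * t)" by (rule mult.commute)
    finally show "(\<lambda>k. real k powr \<mu> * \<bar>c t k - Qeq A Rs \<gamma> s k\<bar>) summable_on {1..} \<and>
                  (\<Sum>\<^sub>\<infinity>k\<in>{1..}. real k powr \<mu> * \<bar>c t k - Qeq A Rs \<gamma> s k\<bar>)
                    \<le> infsum hf {1..} * exp (- kappa_const A Rs \<gamma> s * t)"
      using fs unfolding Q_def \<kappa>_def by simp
  qed
qed

theorem mainTheorem16:
  fixes A Rs \<gamma> :: real and s :: "nat \<Rightarrow> real"
  assumes A_pos: "A > 0" and R_pos: "Rs > 0" and g_pos: "\<gamma> > 0"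
    and s_nonneg: "\<forall>k\<ge>1. s k \<ge> 0"
    and s_mom: "\<forall>\<mu>\<ge>0. (\<lambda>k. real k powr \<mu> * s k) summable_on {1..}"
  shows
    "(is_equilibrium A Rs \<gamma> s (Qeq A Rs \<gamma> s) \<and> nonneg_seq (Qeq A Rs \<gamma> s) \<and>
      (\<forall>q. nonneg_seq q \<and> is_equilibrium A Rs \<gamma> s q \<longrightarrow> (\<forall>k\<ge>1. q k = Qeq A Rs \<gamma> s k)))
   \<and>
    (\<forall>cin \<mu>. nonneg_seq cin \<and> (\<lambda>k. real k * cin k) summable_on {1..} \<and> \<mu> \<ge> 1 \<longrightarrow>
       (\<exists>K. \<forall>c. is_solution A Rs \<gamma> s cin c \<longrightarrow>
          (\<forall>t\<ge>1. (\<lambda>k. real k powr \<mu> * \<bar>c t k - Qeq A Rs \<gamma> s k\<bar>) summable_on {1..} \<and>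
                  (\<Sum>\<^sub>\<infinity>k\<in>{1..}. real k powr \<mu> * \<bar>c t k - Qeq A Rs \<gamma> s k\<bar>)
                    \<le> K * exp (- kappa_const A Rs \<gamma> s * t))))
   \<and>
    (A * s 1 \<ge> 4 * Rs\<^sup>2 \<longrightarrow>
      (\<forall>\<mu> \<beta> c. \<mu> \<ge> 1 \<and> 0 \<le> \<beta> \<and> \<beta> \<le> 1 \<and> nonneg_seq c \<and>
         (\<lambda>l. real l powr (\<mu> + \<beta>) * (c l + Qeq A Rs \<gamma> s l)) summable_on {1..} \<longrightarrow>
         2 * A * (C_const \<mu> + 2) * (\<Sum>\<^sub>\<infinity>l\<in>{1..}. real l powr (\<mu> + \<beta>) * (c l + Qeq A Rs \<gamma> s l)) - Rs
           \<ge> (3 * (C_const \<mu> + 2) - 1) * Rs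
         \<and> (3 * (C_const \<mu> + 2) - 1) * Rs > 0))"
    using part1[OF A_pos R_pos s_nonneg] part2[OF A_pos R_pos g_pos s_nonneg s_mom] part3[OF A_pos R_pos s_nonneg]
  by blast

end
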